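(* Let $m\ge1$, $n\ge2$, let $\lvert\phi\rangle\in(\mathbb{C}^d)^{\otimes m}$ be a unit vector, and let $\lvert\psi\rangle\in(\mathbb{C}^d)^{\otimes n}$ be a unit vector with Schmidt decomposition $\lvert\psi\rangle=\sum_{i=1}^d\alpha_i\lvert w_i\rangle\lvert v_i\rangle$ (with $\alpha_i\ge0$, $\{\lvert w_i\rangle\}\subseteq\mathbb{C}^d$ and $\{\lvert v_i\rangle\}\subseteq(\mathbb{C}^d)^{\otimes n-1}$ orthonormal). Set $\rho:=\sum_{i=1}^d\alpha_i^2\lvert w_i\rangle\langle w_i\rvert\otimes\lvert v_i\rangle\langle v_i\rvert$ and $\lvert\psi'\rangle:=\lvert\phi\rangle\otimes\lvert\psi\rangle\in(\mathbb{C}^d)^{\otimes m+n}$, with the qudits of $\lvert\phi\rangle$ numbered $1,\ldots,m$ and those of $\lvert\psi\rangle$ numbered $m+1,\ldots,m+n$. Let $\Pi$ be a projector acting on a subset $\mathcal{S}\subseteq\{1,\ldots,m+n\}$ of the qudits (tensored with the identity elsewhere). If $\Pi$ crosses the Schmidt cut at qudit $m+1$, i.e. $m+1\in\mathcal{S}$ and $\mathcal{S}\cap\{m+2,\ldots,m+n\}\neq\emptyset$, then $\mathrm{Tr}(\Pi\,\lvert\phi\rangle\langle\phi\rvert\otimes\rho)\ge\frac1d\mathrm{Tr}(\Pi\lvert\psi'\rangle\langle\psi'\rvert)$. Otherwise $\mathrm{Tr}(\Pi\,\lvert\phi\rangle\langle\phi\rvert\otimes\rho)=\mathrm{Tr}(\Pi\lvert\psi'\rangle\langle\psi'\rvert)$.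 *)

theory Defs
  imports Complex_Main
begin

text \<open>Computational basis of (C^d)^{tensor k}: words of length k over {0..<d}.
  Qudit number i (1-based) is the list position i-1.  A vector is a function
  from basis words to complex amplitudes; an operator is a matrix kernel
  indexed by pairs of basis words.\<close>

definition tup :: "nat \<Rightarrow> nat \<Rightarrow> nat list set" where
  "tup k d = {xs. length xs = k \<and> set xs \<subseteq> {..<d}}"

definition unit_vec :: "nat \<Rightarrow> nat \<Rightarrow> (nat list \<Rightarrow> complex) \<Rightarrow> bool" where
  "unit_vec k d v \<longleftrightarrow> (\<Sum>xs\<in>tup k d. (cmod (v xs))\<^sup>2) = 1"

definition loc_tup :: "nat set \<Rightarrow> nat \<Rightarrow> (nat \<Rightarrow> nat) set" where
  "loc_tup S d = {f. (\<forall>i\<in>S. f i < d) \<and> (\<forall>i. i \<notin> S \<longrightarrow> f i = 0)}"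

definition restr :: "nat set \<Rightarrow> nat list \<Rightarrow> (nat \<Rightarrow> nat)" where
  "restr S xs = (\<lambda>i. if i \<in> S then xs ! (i - 1) else 0)"

definition is_projector_on :: "nat set \<Rightarrow> nat \<Rightarrow> ((nat \<Rightarrow> nat) \<Rightarrow> (nat \<Rightarrow> nat) \<Rightarrow> complex) \<Rightarrow> bool" where
  "is_projector_on S d P \<longleftrightarrow>
     (\<forall>f\<in>loc_tup S d. \<forall>g\<in>loc_tup S d. P f g = cnj (P g f)) \<and>
     (\<forall>f\<in>loc_tup S d. \<forall>g\<in>loc_tup S d. (\<Sum>h\<in>loc_tup S d. P f h * P h g) = P f g)"

text \<open>The operator P acting on the qudits in S, tensored with the identity on
  the remaining qudits of {1..N}.\<close>
definition extend_op :: "nat \<Rightarrow> nat set \<Rightarrow> ((nat \<Rightarrow> nat) \<Rightarrow> (nat \<Rightarrow> nat) \<Rightarrow> complex)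
    \<Rightarrow> nat list \<Rightarrow> nat list \<Rightarrow> complex" where
  "extend_op N S P xs ys =
     (if (\<forall>i\<in>{1..N} - S. xs ! (i - 1) = ys ! (i - 1)) then P (restr S xs) (restr S ys) else 0)"

definition tr_prod :: "nat \<Rightarrow> nat \<Rightarrow> (nat list \<Rightarrow> nat list \<Rightarrow> complex)
    \<Rightarrow> (nat list \<Rightarrow> nat list \<Rightarrow> complex) \<Rightarrow> complex" where
  "tr_prod N d A B = (\<Sum>xs\<in>tup N d. \<Sum>ys\<in>tup N d. A xs ys * B ys xs)"

definition proj_op :: "(nat list \<Rightarrow> complex) \<Rightarrow> nat list \<Rightarrow> nat list \<Rightarrow> complex" where
  "proj_op v xs ys = v xs * cnj (v ys)"

end

theory Submission
  imports Defs
begin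

lemma sq_sum_le:
  fixes r :: "'a \<Rightarrow> real"
  assumes "finite I"
  shows "(\<Sum>i\<in>I. r i)\<^sup>2 \<le> real (card I) * (\<Sum>i\<in>I. (r i)\<^sup>2)"
proof -
  have "0 \<le> (\<Sum>i\<in>I. \<Sum>j\<in>I. (r i - r j)\<^sup>2)" by (intro sum_nonneg) auto
  also have "\<dots> = (\<Sum>i\<in>I. \<Sum>j\<in>I. (r i)\<^sup>2 + (r j)\<^sup>2 - 2 * r i * r j)"
    by (simp add: power2_diff)
  also have "\<dots> = 2 * (real (card I) * (\<Sum>i\<in>I. (r i)\<^sup>2)) - 2 * (\<Sum>i\<in>I. r i)\<^sup>2"
    proof -
      have "\<And>i. (\<Sum>j\<in>I. (r i)\<^sup>2 + (r j)\<^sup>2 - 2 * r i * r j)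
              = real (card I) * (r i)\<^sup>2 + (\<Sum>j\<in>I. (r j)\<^sup>2) - 2 * r i * (\<Sum>j\<in>I. r j)"
        by (simp add: sum_subtractf sum.distrib sum_distrib_left mult.assoc)
      hence "(\<Sum>i\<in>I. \<Sum>j\<in>I. (r i)\<^sup>2 + (r j)\<^sup>2 - 2 * r i * r j)
          = (\<Sum>i\<in>I. real (card I) * (r i)\<^sup>2 + (\<Sum>j\<in>I. (r j)\<^sup>2) - 2 * r i * (\<Sum>j\<in>I. r j))"
        by simp
      also have "\<dots> = real (card I) * (\<Sum>i\<in>I. (r i)\<^sup>2) + real (card I) * (\<Sum>j\<in>I. (r j)\<^sup>2)
             - 2 * (\<Sum>i\<in>I. r i) * (\<Sum>j\<in>I. r j)"
        by (simp add: sum_subtractf sum.distrib sum_distrib_left sum_distrib_right mult.assoc mult.commute)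
      finally show ?thesis by (simp add: power2_eq_square)
    qed
  finally show ?thesis by simp
qed

lemma cmod_sum_sq_le:
  fixes z :: "'a \<Rightarrow> complex"
  assumes "finite I"
  shows "(cmod (\<Sum>i\<in>I. z i))\<^sup>2 \<le> real (card I) * (\<Sum>i\<in>I. (cmod (z i))\<^sup>2)"
proof -
  have "cmod (\<Sum>i\<in>I. z i) \<le> (\<Sum>i\<in>I. cmod (z i))" by (rule norm_sum)
  hence "(cmod (\<Sum>i\<in>I. z i))\<^sup>2 \<le> (\<Sum>i\<in>I. cmod (z i))\<^sup>2"
    by (simp add: power_mono)
  also have "\<dots> \<le> real (card I) * (\<Sum>i\<in>I. (cmod (z i))\<^sup>2)" by (rule sq_sum_le[OF assms])
  finally show ?thesis .
qed

lemma tup_finite: "finite (tup k d)"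
proof -
  have "tup k d = {xs. set xs \<subseteq> {..<d} \<and> length xs = k}" unfolding tup_def by auto
  thus ?thesis using finite_lists_length_eq[of "{..<d}" k] by simp
qed

lemma tup_split_bij:
  "bij_betw (\<lambda>(A,a,B). A @ a # B) (tup m d \<times> {..<d} \<times> tup k d) (tup (m + Suc k) d)"
proof (rule bij_betwI')
  fix x y assume "x \<in> tup m d \<times> {..<d} \<times> tup k d" "y \<in> tup m d \<times> {..<d} \<times> tup k d"
  thus "((case x of (A, a, B) \<Rightarrow> A @ a # B) = (case y of (A, a, B) \<Rightarrow> A @ a # B)) = (x = y)"
  proof (cases x, cases y)
    fix A a B A' a' B' assume xy: "x = (A, a, B)" "y = (A', a', B')"
    have "length A = length A'" using \<open>x \<in> _\<close> \<open>y \<in> _\<close> xy by (simp add: tup_def)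
    thus ?thesis using xy by (simp add: append_eq_append_conv)
  qed
next
  fix x assume "x \<in> tup m d \<times> {..<d} \<times> tup k d"
  thus "(case x of (A, a, B) \<Rightarrow> A @ a # B) \<in> tup (m + Suc k) d" by (auto simp: tup_def)
next
  fix xs assume xs: "xs \<in> tup (m + Suc k) d"
  show "\<exists>x\<in>tup m d \<times> {..<d} \<times> tup k d. xs = (case x of (A, a, B) \<Rightarrow> A @ a # B)"
  proof (intro bexI)
    show "xs = (case (take m xs, xs ! m, drop (Suc m) xs) of (A, a, B) \<Rightarrow> A @ a # B)"
      using xs by (simp add: tup_def id_take_nth_drop[symmetric])
    show "(take m xs, xs ! m, drop (Suc m) xs) \<in> tup m d \<times> {..<d} \<times> tup k d"
    proof -
      have "set xs \<subseteq> {..<d}" "length xs = m + Suc k" using xs by (auto simp: tup_def)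
      moreover have "xs ! m \<in> set xs" using \<open>length xs = m + Suc k\<close> by simp
      ultimately have "xs ! m < d" by blast
      thus ?thesis using \<open>set xs \<subseteq> {..<d}\<close> \<open>length xs = m + Suc k\<close>
        by (auto simp: tup_def dest: in_set_takeD in_set_dropD)
    qed
  qed
qed

lemma sum_tup_split:
  "(\<Sum>xs\<in>tup (m + Suc k) d. f xs) = (\<Sum>A\<in>tup m d. \<Sum>a<d. \<Sum>B\<in>tup k d. f (A @ a # B))"
proof -
  have "(\<Sum>xs\<in>tup (m + Suc k) d. f xs) = (\<Sum>x\<in>tup m d \<times> {..<d} \<times> tup k d. f (case x of (A,a,B) \<Rightarrow> A @ a # B))"
    using sum.reindex_bij_betw[OF tup_split_bij, of f] by simp
  also have "\<dots> = (\<Sum>A\<in>tup m d. \<Sum>a<d. \<Sum>B\<in>tup k d. f (A @ a # B))"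
    unfolding sum.cartesian_product by (simp add: split_def)
  finally show ?thesis .
qed

lemma restr_in:
  assumes "S \<subseteq> {1..N}" "xs \<in> tup N d"
  shows "restr S xs \<in> loc_tup S d"
proof -
  { fix i assume i: "i \<in> S"
    have "i \<in> {1..N}" using assms i by auto
    hence "i - 1 < length xs" using assms by (auto simp: tup_def)
    hence "xs ! (i - 1) \<in> set xs" by simp
    hence "xs ! (i - 1) < d" using assms by (auto simp: tup_def) }
  thus ?thesis by (auto simp: loc_tup_def restr_def)
qed

lemma ext_herm:
  assumes "S \<subseteq> {1..N}" "is_projector_on S d P" "xs \<in> tup N d" "ys \<in> tup N d"
  shows "extend_op N S P xs ys = cnj (extend_op N S P ys xs)"
proof -
  have sym: "(\<forall>i\<in>{1..N}-S. xs!(i-1) = ys!(i-1)) = (\<forall>i\<in>{1..N}-S. ys!(i-1) = xs!(i-1))" by auto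
  have "P (restr S xs) (restr S ys) = cnj (P (restr S ys) (restr S xs))"
    using assms(2) restr_in[OF assms(1) assms(3)] restr_in[OF assms(1) assms(4)]
    unfolding is_projector_on_def by blast
  thus ?thesis unfolding extend_op_def using sym by simp
qed

definition agr :: "nat \<Rightarrow> nat set \<Rightarrow> nat list \<Rightarrow> nat list \<Rightarrow> bool" where
  "agr N S xs ys \<longleftrightarrow> (\<forall>i\<in>{1..N} - S. xs ! (i - 1) = ys ! (i - 1))"

lemma agr_sym: "agr N S a b \<Longrightarrow> agr N S b a"
  unfolding agr_def by simp

lemma agr_trans: "agr N S a b \<Longrightarrow> agr N S b c \<Longrightarrow> agr N S a c"
  unfolding agr_def by simp

lemma restr_bij:
  assumes S: "S \<subseteq> {1..N}" and xs: "xs \<in> tup N d"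
  shows "bij_betw (restr S) {ys \<in> tup N d. agr N S xs ys} (loc_tup S d)"
proof (rule bij_betwI')
  fix y z assume y: "y \<in> {ys \<in> tup N d. agr N S xs ys}" and z: "z \<in> {ys \<in> tup N d. agr N S xs ys}"
  show "(restr S y = restr S z) = (y = z)"
  proof
    assume eq: "restr S y = restr S z"
    show "y = z"
    proof (rule nth_equalityI)
      show "length y = length z" using y z by (simp add: tup_def)
      fix j assume "j < length y"
      hence j: "j < N" using y by (simp add: tup_def)
      show "y ! j = z ! j"
      proof (cases "Suc j \<in> S")
        case True
        have "restr S y (Suc j) = restr S z (Suc j)" using eq by simp
        thus ?thesis using True by (simp add: restr_def)
      next
        case False
        hence "Suc j \<in> {1..N} - S" using j by auto
        hence "xs ! (Suc j - 1) = y ! (Suc j - 1)" "xs ! (Suc j - 1) = z ! (Suc j - 1)"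
          using y z unfolding agr_def by blast+
        thus ?thesis by simp
      qed
    qed
  qed simp
next
  fix y assume "y \<in> {ys \<in> tup N d. agr N S xs ys}"
  thus "restr S y \<in> loc_tup S d" using restr_in[OF S] by auto
next
  fix f assume f: "f \<in> loc_tup S d"
  define y where "y = map (\<lambda>j. if Suc j \<in> S then f (Suc j) else xs ! j) [0..<N]"
  have ly: "length y = N" by (simp add: y_def)
  have yn: "\<And>j. j < N \<Longrightarrow> y ! j = (if Suc j \<in> S then f (Suc j) else xs ! j)"
    by (simp add: y_def)
  have "y \<in> tup N d"
  proof -
    { fix a assume "a \<in> set y"
      then obtain j where j: "j < N" "a = y ! j" using ly by (auto simp: in_set_conv_nth)
      have "a < d"
      proof (cases "Suc j \<in> S")
        case True thus ?thesis using j yn f by (auto simp: loc_tup_def)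
      next
        case False
        have "xs ! j \<in> set xs" using j xs by (simp add: tup_def)
        moreover have "set xs \<subseteq> {..<d}" using xs by (simp add: tup_def)
        ultimately have "xs ! j < d" by blast
        thus ?thesis using j yn False by auto
      qed }
    thus ?thesis using ly by (auto simp: tup_def)
  qed
  moreover have "agr N S xs y"
    unfolding agr_def
  proof
    fix i assume i: "i \<in> {1..N} - S"
    hence "i - 1 < N" "Suc (i - 1) = i" by auto
    thus "xs ! (i - 1) = y ! (i - 1)" using yn i by auto
  qed
  moreover have "f = restr S y"
  proof
    fix i show "f i = restr S y i"
    proof (cases "i \<in> S")
      case True
      hence "i \<in> {1..N}" using S by blast
      hence "i - 1 < N" "Suc (i - 1) = i" by auto
      thus ?thesis using yn True by (simp add: restr_def)
    next
      case False thus ?thesis using f by (simp add: restr_def loc_tup_def)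
    qed
  qed
  ultimately show "\<exists>y\<in>{ys \<in> tup N d. agr N S xs ys}. f = restr S y" by blast
qed

lemma ext_idem:
  assumes S: "S \<subseteq> {1..N}" and PP: "is_projector_on S d P"
    and xs: "xs \<in> tup N d" and zs: "zs \<in> tup N d"
  shows "(\<Sum>ys\<in>tup N d. extend_op N S P xs ys * extend_op N S P ys zs) = extend_op N S P xs zs"
proof -
  let ?E = "extend_op N S P"
  have E_def': "\<And>a b. ?E a b = (if agr N S a b then P (restr S a) (restr S b) else 0)"
    by (simp add: extend_op_def agr_def)
  have "(\<Sum>ys\<in>tup N d. ?E xs ys * ?E ys zs) = (\<Sum>ys\<in>{ys \<in> tup N d. agr N S xs ys}. ?E xs ys * ?E ys zs)"
  proof (rule sum.mono_neutral_right)
    show "\<forall>i\<in>tup N d - {ys \<in> tup N d. agr N S xs ys}. ?E xs i * ?E i zs = 0"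
      by (simp add: E_def')
  qed (auto simp: tup_finite)
  also have "\<dots> = ?E xs zs"
  proof (cases "agr N S xs zs")
    case True
    have "(\<Sum>ys\<in>{ys \<in> tup N d. agr N S xs ys}. ?E xs ys * ?E ys zs)
        = (\<Sum>ys\<in>{ys \<in> tup N d. agr N S xs ys}. P (restr S xs) (restr S ys) * P (restr S ys) (restr S zs))"
    proof (rule sum.cong[OF refl])
      fix ys assume "ys \<in> {ys \<in> tup N d. agr N S xs ys}"
      hence "agr N S xs ys" "agr N S ys zs" using True agr_sym agr_trans by blast+
      thus "?E xs ys * ?E ys zs = P (restr S xs) (restr S ys) * P (restr S ys) (restr S zs)"
        by (simp add: E_def')
    qed
    also have "\<dots> = (\<Sum>h\<in>loc_tup S d. P (restr S xs) h * P h (restr S zs))"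
      using sum.reindex_bij_betw[OF restr_bij[OF S xs], of "\<lambda>h. P (restr S xs) h * P h (restr S zs)"] by simp
    also have "\<dots> = P (restr S xs) (restr S zs)"
      using PP restr_in[OF S xs] restr_in[OF S zs] unfolding is_projector_on_def by blast
    finally show ?thesis using True by (simp add: E_def')
  next
    case False
    have "(\<Sum>ys\<in>{ys \<in> tup N d. agr N S xs ys}. ?E xs ys * ?E ys zs) = 0"
    proof (rule sum.neutral, rule ballI)
      fix ys assume "ys \<in> {ys \<in> tup N d. agr N S xs ys}"
      hence "\<not> agr N S ys zs" using False agr_trans by blast
      thus "?E xs ys * ?E ys zs = 0" by (simp add: E_def')
    qed
    thus ?thesis using False by (simp add: E_def')
  qed
  finally show ?thesis .
qed

lemma quad_form:
  fixes E :: "'a \<Rightarrow> 'a \<Rightarrow> complex" and T :: "'a set"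
  assumes fin: "finite T"
    and herm: "\<And>a b. a \<in> T \<Longrightarrow> b \<in> T \<Longrightarrow> E a b = cnj (E b a)"
    and idem: "\<And>a c. a \<in> T \<Longrightarrow> c \<in> T \<Longrightarrow> (\<Sum>b\<in>T. E a b * E b c) = E a c"
  shows "(\<Sum>a\<in>T. \<Sum>b\<in>T. E a b * (x b * cnj (x a)))
        = complex_of_real (\<Sum>c\<in>T. (cmod (\<Sum>b\<in>T. E c b * x b))\<^sup>2)"
proof -
  have "complex_of_real (\<Sum>c\<in>T. (cmod (\<Sum>b\<in>T. E c b * x b))\<^sup>2)
      = (\<Sum>c\<in>T. (\<Sum>b\<in>T. E c b * x b) * cnj (\<Sum>a\<in>T. E c a * x a))"
    by (simp only: of_real_sum complex_norm_square)
  also have "\<dots> = (\<Sum>c\<in>T. \<Sum>b\<in>T. \<Sum>a\<in>T. E a c * E c b * (x b * cnj (x a)))"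
  proof (rule sum.cong[OF refl])
    fix c assume c: "c \<in> T"
    have "(\<Sum>b\<in>T. E c b * x b) * cnj (\<Sum>a\<in>T. E c a * x a)
        = (\<Sum>b\<in>T. \<Sum>a\<in>T. (E c b * x b) * (cnj (E c a) * cnj (x a)))"
      by (simp add: sum_distrib_left sum_distrib_right) (rule sum.swap)
    also have "\<dots> = (\<Sum>b\<in>T. \<Sum>a\<in>T. E a c * E c b * (x b * cnj (x a)))"
    proof (intro sum.cong refl)
      fix b a assume "b \<in> T" "a \<in> T"
      hence "cnj (E c a) = E a c" using herm[of a c] c by simp
      thus "E c b * x b * (cnj (E c a) * cnj (x a)) = E a c * E c b * (x b * cnj (x a))"
        by (simp add: ac_simps)
    qed
    finally show "(\<Sum>b\<in>T. E c b * x b) * cnj (\<Sum>a\<in>T. E c a * x a)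
        = (\<Sum>b\<in>T. \<Sum>a\<in>T. E a c * E c b * (x b * cnj (x a)))" .
  qed
  also have "\<dots> = (\<Sum>a\<in>T. \<Sum>b\<in>T. (\<Sum>c\<in>T. E a c * E c b) * (x b * cnj (x a)))"
  proof -
    have "(\<Sum>c\<in>T. \<Sum>b\<in>T. \<Sum>a\<in>T. E a c * E c b * (x b * cnj (x a)))
        = (\<Sum>b\<in>T. \<Sum>c\<in>T. \<Sum>a\<in>T. E a c * E c b * (x b * cnj (x a)))"
      by (rule sum.swap)
    also have "\<dots> = (\<Sum>b\<in>T. \<Sum>a\<in>T. \<Sum>c\<in>T. E a c * E c b * (x b * cnj (x a)))"
      by (intro sum.cong refl sum.swap)
    also have "\<dots> = (\<Sum>a\<in>T. \<Sum>b\<in>T. \<Sum>c\<in>T. E a c * E c b * (x b * cnj (x a)))"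
      by (rule sum.swap)
    also have "\<dots> = (\<Sum>a\<in>T. \<Sum>b\<in>T. (\<Sum>c\<in>T. E a c * E c b) * (x b * cnj (x a)))"
      by (simp add: sum_distrib_right)
    finally show ?thesis .
  qed
  also have "\<dots> = (\<Sum>a\<in>T. \<Sum>b\<in>T. E a b * (x b * cnj (x a)))"
    by (intro sum.cong refl) (simp add: idem)
  finally show ?thesis by simp
qed

lemma tr_lin:
  "tr_prod N d E (\<lambda>xs ys. \<Sum>i\<in>I. c i * X i xs ys) = (\<Sum>i\<in>I. c i * tr_prod N d E (X i))"
proof -
  have "tr_prod N d E (\<lambda>xs ys. \<Sum>i\<in>I. c i * X i xs ys)
      = (\<Sum>xs\<in>tup N d. \<Sum>ys\<in>tup N d. \<Sum>i\<in>I. c i * (E xs ys * X i ys xs))"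
    unfolding tr_prod_def by (simp add: sum_distrib_left ac_simps)
  also have "\<dots> = (\<Sum>xs\<in>tup N d. \<Sum>i\<in>I. \<Sum>ys\<in>tup N d. c i * (E xs ys * X i ys xs))"
    by (intro sum.cong refl sum.swap)
  also have "\<dots> = (\<Sum>i\<in>I. \<Sum>xs\<in>tup N d. \<Sum>ys\<in>tup N d. c i * (E xs ys * X i ys xs))"
    by (rule sum.swap)
  also have "\<dots> = (\<Sum>i\<in>I. c i * tr_prod N d E (X i))"
    unfolding tr_prod_def by (simp add: sum_distrib_left)
  finally show ?thesis .
qed

lemma tr_cong:
  assumes "\<And>xs ys. xs \<in> tup N d \<Longrightarrow> ys \<in> tup N d \<Longrightarrow> X xs ys = Y xs ys"
  shows "tr_prod N d E X = tr_prod N d E Y"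
  unfolding tr_prod_def using assms by (intro sum.cong refl) simp

lemma tr_quad:
  assumes S: "S \<subseteq> {1..N}" and PP: "is_projector_on S d P"
  shows "tr_prod N d (extend_op N S P) (proj_op x)
      = complex_of_real (\<Sum>c\<in>tup N d. (cmod (\<Sum>b\<in>tup N d. extend_op N S P c b * x b))\<^sup>2)"
  unfolding tr_prod_def proj_op_def
  by (rule quad_form[OF tup_finite]) (auto intro: ext_herm[OF S PP] ext_idem[OF S PP])

lemma d_pos:
  assumes "m \<ge> 1" "unit_vec m d phi" shows "d \<ge> 1"
proof (rule ccontr)
  assume "\<not> d \<ge> 1" hence d0: "d = 0" by simp
  have "tup m d = {}"
  proof -
    { fix xs assume "xs \<in> tup m d"
      hence "length xs = m" "set xs \<subseteq> {}" using d0 by (auto simp: tup_def)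
      hence False using assms(1) by auto }
    thus ?thesis by blast
  qed
  thus False using assms(2) by (simp add: unit_vec_def)
qed

lemma part1:
  fixes m n d :: nat
    and phi psi :: "nat list \<Rightarrow> complex"
    and alpha :: "nat \<Rightarrow> real"
    and w :: "nat \<Rightarrow> nat \<Rightarrow> complex"
    and v :: "nat \<Rightarrow> nat list \<Rightarrow> complex"
    and S :: "nat set"
    and P :: "(nat \<Rightarrow> nat) \<Rightarrow> (nat \<Rightarrow> nat) \<Rightarrow> complex"
  assumes m: "m \<ge> 1" and n: "n \<ge> 2"
    and phi_unit: "unit_vec m d phi"
    and schmidt: "\<forall>a<d. \<forall>ys\<in>tup (n - 1) d.
          psi (a # ys) = (\<Sum>i=1..d. complex_of_real (alpha i) * w i a * v i ys)"
    and rho_def: "rho = (\<lambda>xs ys. \<Sum>i=1..d. complex_of_real ((alpha i)\<^sup>2)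
          * (w i (hd xs) * cnj (w i (hd ys))) * (v i (tl xs) * cnj (v i (tl ys))))"
    and psi'_def: "psi' = (\<lambda>xs. phi (take m xs) * psi (drop m xs))"
    and sigma_def: "sigma = (\<lambda>xs ys. proj_op phi (take m xs) (take m ys)
          * rho (drop m xs) (drop m ys))"
    and S_sub: "S \<subseteq> {1..m+n}"
    and P_proj: "is_projector_on S d P"
    and Pi_def: "Pi = extend_op (m + n) S P"
  shows "Re (tr_prod (m + n) d Pi sigma) \<ge> (1 / real d) * Re (tr_prod (m + n) d Pi (proj_op psi'))"
proof -
  define N where "N = m + n"
  define T where "T = tup N d"
  define E where "E = extend_op N S P"
  define y where "y = (\<lambda>i xs. phi (take m xs) * (w i (hd (drop m xs)) * v i (tl (drop m xs))))"
  define U where "U = (\<lambda>x zs. \<Sum>b\<in>T. E zs b * x b)"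
  define nq where "nq = (\<lambda>x. \<Sum>c\<in>T. (cmod (U x c))\<^sup>2)"
  define psi2 where "psi2 = (\<lambda>xs. \<Sum>i=1..d. complex_of_real (alpha i) * y i xs)"
  have d1: "d \<ge> 1" by (rule d_pos[OF m phi_unit])
  have S': "S \<subseteq> {1..N}" using S_sub by (simp add: N_def)
  have trq: "\<And>x. tr_prod N d E (proj_op x) = complex_of_real (nq x)"
    unfolding E_def nq_def U_def T_def by (rule tr_quad[OF S' P_proj])
  have sig: "sigma = (\<lambda>xs ys. \<Sum>i=1..d. complex_of_real ((alpha i)\<^sup>2) * proj_op (y i) xs ys)"
    unfolding sigma_def rho_def y_def proj_op_def
    by (intro ext) (simp add: sum_distrib_left ac_simps)
  have trs: "tr_prod N d E sigma = complex_of_real (\<Sum>i=1..d. (alpha i)\<^sup>2 * nq (y i))"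
    unfolding sig tr_lin trq by simp
  have psi'2: "\<And>xs. xs \<in> T \<Longrightarrow> psi' xs = psi2 xs"
  proof -
    fix xs assume xs: "xs \<in> T"
    hence lx: "length xs = m + n" and sx: "set xs \<subseteq> {..<d}" by (auto simp: T_def N_def tup_def)
    have "drop m xs \<noteq> []" using lx n by auto
    then obtain a t where dm: "drop m xs = a # t" by (cases "drop m xs") auto
    have "set (drop m xs) \<subseteq> set xs" by (rule set_drop_subset)
    hence hd: "a < d" and tl': "set t \<subseteq> {..<d}" using sx dm by auto
    have "length t = n - 1" using dm lx by (metis diff_add_inverse length_Cons length_drop diff_Suc_1)
    hence tl: "t \<in> tup (n - 1) d" using tl' by (simp add: tup_def)
    have "psi (drop m xs) = (\<Sum>i=1..d. complex_of_real (alpha i) * w i (hd (drop m xs)) * v i (tl (drop m xs)))"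
      using schmidt hd tl dm by simp
    thus "psi' xs = psi2 xs" unfolding psi'_def psi2_def y_def
      by (simp add: sum_distrib_left ac_simps)
  qed
  have trp: "tr_prod N d E (proj_op psi') = complex_of_real (nq psi2)"
  proof -
    have "tr_prod N d E (proj_op psi') = tr_prod N d E (proj_op psi2)"
      by (rule tr_cong) (simp add: proj_op_def psi'2 T_def)
    thus ?thesis by (simp add: trq)
  qed
  have Ulin: "\<And>zs. U psi2 zs = (\<Sum>i=1..d. complex_of_real (alpha i) * U (y i) zs)"
  proof -
    fix zs
    have "U psi2 zs = (\<Sum>b\<in>T. \<Sum>i=1..d. complex_of_real (alpha i) * (E zs b * y i b))"
      unfolding U_def psi2_def by (simp add: sum_distrib_left ac_simps)
    also have "\<dots> = (\<Sum>i=1..d. \<Sum>b\<in>T. complex_of_real (alpha i) * (E zs b * y i b))"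
      by (rule sum.swap)
    also have "\<dots> = (\<Sum>i=1..d. complex_of_real (alpha i) * U (y i) zs)"
      unfolding U_def by (simp add: sum_distrib_left)
    finally show "U psi2 zs = (\<Sum>i=1..d. complex_of_real (alpha i) * U (y i) zs)" .
  qed
  have "nq psi2 \<le> (\<Sum>c\<in>T. real d * (\<Sum>i=1..d. (cmod (complex_of_real (alpha i) * U (y i) c))\<^sup>2))"
    unfolding nq_def Ulin
    using cmod_sum_sq_le[of "{1..d}"] by (intro sum_mono) simp
  also have "\<dots> = real d * (\<Sum>i=1..d. (alpha i)\<^sup>2 * nq (y i))"
  proof -
    have "(\<Sum>c\<in>T. real d * (\<Sum>i=1..d. (cmod (complex_of_real (alpha i) * U (y i) c))\<^sup>2))
        = real d * (\<Sum>c\<in>T. \<Sum>i=1..d. (alpha i)\<^sup>2 * (cmod (U (y i) c))\<^sup>2)"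
      by (simp add: sum_distrib_left norm_mult power_mult_distrib)
    also have "\<dots> = real d * (\<Sum>i=1..d. \<Sum>c\<in>T. (alpha i)\<^sup>2 * (cmod (U (y i) c))\<^sup>2)"
      by (subst sum.swap) (rule refl)
    also have "\<dots> = real d * (\<Sum>i=1..d. (alpha i)\<^sup>2 * nq (y i))"
      unfolding nq_def by (simp add: sum_distrib_left)
    finally show ?thesis .
  qed
  finally have ineq: "nq psi2 \<le> real d * (\<Sum>i=1..d. (alpha i)\<^sup>2 * nq (y i))" .
  have "(1 / real d) * nq psi2 \<le> (\<Sum>i=1..d. (alpha i)\<^sup>2 * nq (y i))"
    using ineq d1 by (simp add: field_simps)
  thus ?thesis using trs trp by (simp add: Pi_def E_def N_def)
qed

lemma E_caseA:
  assumes S: "S \<subseteq> {1..N}" and j: "j < N" "Suc j \<notin> S"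
    and L: "length L = N" "length L' = N"
  shows "extend_op N S P (L[j:=a]) (L'[j:=a']) =
         (if a = a' then extend_op N S P (L[j:=0]) (L'[j:=0]) else 0)"
proof -
  have r: "\<And>c M. restr S (M[j:=c]) = restr S M"
  proof
    fix c M i show "restr S (M[j:=c]) i = restr S M i"
    proof (cases "i \<in> S")
      case True
      hence "i \<noteq> Suc j" "i \<ge> 1" using S j by auto
      hence "i - 1 \<noteq> j" by auto
      thus ?thesis using True by (simp add: restr_def)
    qed (simp add: restr_def)
  qed
  have key: "\<And>c c'. (\<forall>i\<in>{1..N} - S. L[j:=c] ! (i - 1) = L'[j:=c'] ! (i - 1)) \<longleftrightarrow>
      c = c' \<and> (\<forall>i\<in>{1..N} - S. i - 1 \<noteq> j \<longrightarrow> L ! (i - 1) = L' ! (i - 1))"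
  proof -
    fix c c'
    have sj: "Suc j \<in> {1..N} - S" using j by auto
    have nth: "\<And>M e i. length M = N \<Longrightarrow> i \<in> {1..N} \<Longrightarrow> M[j:=e] ! (i - 1) = (if i - 1 = j then e else M ! (i - 1))"
      by (auto simp: nth_list_update)
    show "?thesis c c'"
    proof
      assume h: "\<forall>i\<in>{1..N} - S. L[j:=c] ! (i - 1) = L'[j:=c'] ! (i - 1)"
      have "c = c'" using h[rule_format, OF sj] nth[OF L(1), of "Suc j"] nth[OF L(2), of "Suc j"] sj by simp
      moreover have "\<forall>i\<in>{1..N} - S. i - 1 \<noteq> j \<longrightarrow> L ! (i - 1) = L' ! (i - 1)"
      proof (intro ballI impI)
        fix i assume i: "i \<in> {1..N} - S" "i - 1 \<noteq> j"
        thus "L ! (i - 1) = L' ! (i - 1)" using h[rule_format, OF i(1)] nth[OF L(1), of i] nth[OF L(2), of i] by simp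
      qed
      ultimately show "c = c' \<and> (\<forall>i\<in>{1..N} - S. i - 1 \<noteq> j \<longrightarrow> L ! (i - 1) = L' ! (i - 1))" by blast
    next
      assume h: "c = c' \<and> (\<forall>i\<in>{1..N} - S. i - 1 \<noteq> j \<longrightarrow> L ! (i - 1) = L' ! (i - 1))"
      show "\<forall>i\<in>{1..N} - S. L[j:=c] ! (i - 1) = L'[j:=c'] ! (i - 1)"
      proof
        fix i assume i: "i \<in> {1..N} - S"
        show "L[j:=c] ! (i - 1) = L'[j:=c'] ! (i - 1)"
          using h i nth[OF L(1), of i] nth[OF L(2), of i] by auto
      qed
    qed
  qed
  show ?thesis unfolding extend_op_def key r by simp
qed

lemma E_caseB:
  assumes S: "S \<subseteq> {1..m + Suc k}" and SB: "S \<inter> {m+2..m+Suc k} = {}"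
    and L: "length A = m" "length A' = m" "length B = k" "length B' = k"
  shows "extend_op (m + Suc k) S P (A @ a # B) (A' @ a' # B') =
         (if B = B' then extend_op (m + Suc k) S P (A @ a # replicate k 0) (A' @ a' # replicate k 0) else 0)"
proof -
  let ?N = "m + Suc k"
  have nthL: "\<And>X c Y i. length X = m \<Longrightarrow> (X @ c # Y) ! i = (if i < Suc m then (X @ [c]) ! i else Y ! (i - Suc m))"
    by (simp add: nth_append nth_Cons')
  have r: "\<And>X c Y. length X = m \<Longrightarrow> restr S (X @ c # Y) = restr S (X @ c # replicate k 0)"
  proof
    fix X Y :: "nat list" and c i :: nat assume X: "length X = m"
    show "restr S (X @ c # Y) i = restr S (X @ c # replicate k 0) i"
    proof (cases "i \<in> S")
      case True
      have "i \<in> {1..m + Suc k}" using S True by blast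
      moreover have "i \<notin> {m+2..m + Suc k}" using SB True by blast
      ultimately have "i - 1 < Suc m" by auto
      thus ?thesis using True nthL[OF X, of c Y "i - 1"] nthL[OF X, of c "replicate k 0" "i - 1"]
        by (simp add: restr_def)
    qed (simp add: restr_def)
  qed
  have split: "\<And>(X::nat list) (c::nat) Y X' c' Y'. length X = m \<Longrightarrow> length X' = m \<Longrightarrow> length Y = k \<Longrightarrow> length Y' = k \<Longrightarrow>
     (\<forall>i\<in>{1..?N} - S. (X @ c # Y) ! (i - 1) = (X' @ c' # Y') ! (i - 1)) \<longleftrightarrow>
     (\<forall>i\<in>{1..Suc m} - S. (X @ [c]) ! (i - 1) = (X' @ [c']) ! (i - 1)) \<and> Y = Y'"
  proof -
    fix X Y X' Y' :: "nat list" and c c' :: nat assume X: "length X = m" and X': "length X' = m" and Y: "length Y = k" and Y': "length Y' = k"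
    show "?thesis X c Y X' c' Y'"
    proof
      assume h: "\<forall>i\<in>{1..?N} - S. (X @ c # Y) ! (i - 1) = (X' @ c' # Y') ! (i - 1)"
      have 1: "\<forall>i\<in>{1..Suc m} - S. (X @ [c]) ! (i - 1) = (X' @ [c']) ! (i - 1)"
      proof
        fix i assume i: "i \<in> {1..Suc m} - S"
        hence i1: "i \<in> {1..?N} - S" and i2: "i - 1 < Suc m" by auto
        have e: "(X @ c # Y) ! (i - 1) = (X' @ c' # Y') ! (i - 1)" using h i1 by blast
        have e1: "(X @ c # Y) ! (i - 1) = (X @ [c]) ! (i - 1)" using nthL[OF X, of c Y "i - 1"] i2 by simp
        have e2: "(X' @ c' # Y') ! (i - 1) = (X' @ [c']) ! (i - 1)" using nthL[OF X', of c' Y' "i - 1"] i2 by simp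
        show "(X @ [c]) ! (i - 1) = (X' @ [c']) ! (i - 1)" using e e1 e2 by simp
      qed
      have "Y = Y'"
      proof (rule nth_equalityI)
        show "length Y = length Y'" using Y Y' by simp
        fix t assume t: "t < length Y"
        define i where "i = t + m + 2"
        have "i \<in> {m+2..m + Suc k}" using t Y by (simp add: i_def)
        hence "i \<notin> S" using SB by blast
        moreover have "i \<in> {1..?N}" using t Y by (simp add: i_def)
        ultimately have i1: "i \<in> {1..?N} - S" by blast
        have i2: "\<not> i - 1 < Suc m" and i3: "i - 1 - Suc m = t" by (auto simp: i_def)
        have e: "(X @ c # Y) ! (i - 1) = (X' @ c' # Y') ! (i - 1)" using h i1 by blast
        have e1: "(X @ c # Y) ! (i - 1) = Y ! t" using nthL[OF X, of c Y "i - 1"] i2 i3 by simp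
        have e2: "(X' @ c' # Y') ! (i - 1) = Y' ! t" using nthL[OF X', of c' Y' "i - 1"] i2 i3 by simp
        show "Y ! t = Y' ! t" using e e1 e2 by simp
      qed
      with 1 show "(\<forall>i\<in>{1..Suc m} - S. (X @ [c]) ! (i - 1) = (X' @ [c']) ! (i - 1)) \<and> Y = Y'" by blast
    next
      assume h: "(\<forall>i\<in>{1..Suc m} - S. (X @ [c]) ! (i - 1) = (X' @ [c']) ! (i - 1)) \<and> Y = Y'"
      show "\<forall>i\<in>{1..?N} - S. (X @ c # Y) ! (i - 1) = (X' @ c' # Y') ! (i - 1)"
      proof
        fix i assume i: "i \<in> {1..?N} - S"
        show "(X @ c # Y) ! (i - 1) = (X' @ c' # Y') ! (i - 1)"
        proof (cases "i - 1 < Suc m")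
          case True
          hence "i \<in> {1..Suc m} - S" using i by auto
          thus ?thesis using h True nthL[OF X, of c Y "i - 1"] nthL[OF X', of c' Y' "i - 1"] by simp
        next
          case False thus ?thesis using h nthL[OF X, of c Y "i - 1"] nthL[OF X', of c' Y' "i - 1"] by simp
        qed
      qed
    qed
  qed
  show ?thesis
    unfolding extend_op_def split[OF L] split[OF L(1,2) length_replicate length_replicate]
      r[OF L(1), of a B] r[OF L(2), of a' B']
    by simp
qed

lemma tr_split6:
  "tr_prod (m + Suc k) d E D = (\<Sum>A\<in>tup m d. \<Sum>a<d. \<Sum>B\<in>tup k d. \<Sum>A'\<in>tup m d. \<Sum>a'<d. \<Sum>B'\<in>tup k d.
      E (A @ a # B) (A' @ a' # B') * D (A' @ a' # B') (A @ a # B))"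
  unfolding tr_prod_def sum_tup_split ..

lemma sum_if_const: "(\<Sum>x\<in>X. if c then f x else 0) = (if c then sum f X else (0::'a::comm_monoid_add))"
  by simp

lemma trace_zero_A:
  assumes hN: "N = m + Suc k" and S: "S \<subseteq> {1..N}" and Sm: "Suc m \<notin> S"
    and D0: "\<And>A A' B B'. A \<in> tup m d \<Longrightarrow> A' \<in> tup m d \<Longrightarrow> B \<in> tup k d \<Longrightarrow> B' \<in> tup k d \<Longrightarrow>
              (\<Sum>a<d. D (A' @ a # B') (A @ a # B)) = 0"
  shows "tr_prod N d (extend_op N S P) D = 0"
proof -
  let ?N = "N"
  let ?E = "extend_op ?N S P"
  let ?G = "\<lambda>A B A' B'. ?E (A @ 0 # B) (A' @ 0 # B')"
  have Eeq: "\<And>A B A' B' a a'. A \<in> tup m d \<Longrightarrow> A' \<in> tup m d \<Longrightarrow> B \<in> tup k d \<Longrightarrow> B' \<in> tup k d \<Longrightarrow>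
      ?E (A @ a # B) (A' @ a' # B') = (if a' = a then ?G A B A' B' else 0)"
  proof -
    fix A B A' B' :: "nat list" and a a' :: nat
    assume h: "A \<in> tup m d" "A' \<in> tup m d" "B \<in> tup k d" "B' \<in> tup k d"
    hence l: "length A = m" "length A' = m" "length B = k" "length B' = k" by (auto simp: tup_def)
    have u: "\<And>X Y c. length X = m \<Longrightarrow> X @ c # Y = (X @ 0 # Y)[m := c]"
      by (simp add: list_update_append)
    have "?E ((A @ 0 # B)[m := a]) ((A' @ 0 # B')[m := a']) =
        (if a = a' then ?E ((A @ 0 # B)[m := 0]) ((A' @ 0 # B')[m := 0]) else 0)"
      by (rule E_caseA[OF S]) (use Sm l hN in auto)
    thus "?E (A @ a # B) (A' @ a' # B') = (if a' = a then ?G A B A' B' else 0)"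
      using l by (simp add: list_update_append eq_commute)
  qed
  have "tr_prod ?N d ?E D = (\<Sum>A\<in>tup m d. \<Sum>a<d. \<Sum>B\<in>tup k d. \<Sum>A'\<in>tup m d. \<Sum>B'\<in>tup k d.
      ?G A B A' B' * D (A' @ a # B') (A @ a # B))"
    unfolding tr_split6[of m k d, folded hN]
  proof (intro sum.cong refl)
    fix A a B A' assume h: "A \<in> tup m d" "a \<in> {..<d}" "B \<in> tup k d" "A' \<in> tup m d"
    have "(\<Sum>a'<d. \<Sum>B'\<in>tup k d. ?E (A @ a # B) (A' @ a' # B') * D (A' @ a' # B') (A @ a # B))
        = (\<Sum>a'<d. if a' = a then (\<Sum>B'\<in>tup k d. ?G A B A' B' * D (A' @ a' # B') (A @ a # B)) else 0)"
    proof (rule sum.cong[OF refl])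
      fix a'
      have "(\<Sum>B'\<in>tup k d. ?E (A @ a # B) (A' @ a' # B') * D (A' @ a' # B') (A @ a # B))
        = (\<Sum>B'\<in>tup k d. if a' = a then ?G A B A' B' * D (A' @ a' # B') (A @ a # B) else 0)"
      proof (rule sum.cong[OF refl])
        fix B' assume B': "B' \<in> tup k d"
        show "?E (A @ a # B) (A' @ a' # B') * D (A' @ a' # B') (A @ a # B)
           = (if a' = a then ?G A B A' B' * D (A' @ a' # B') (A @ a # B) else 0)"
          using Eeq[OF h(1) h(4) h(3) B', of a a'] by simp
      qed
      thus "(\<Sum>B'\<in>tup k d. ?E (A @ a # B) (A' @ a' # B') * D (A' @ a' # B') (A @ a # B))
        = (if a' = a then (\<Sum>B'\<in>tup k d. ?G A B A' B' * D (A' @ a' # B') (A @ a # B)) else 0)"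
        by (simp only: sum_if_const)
    qed
    also have "\<dots> = (\<Sum>B'\<in>tup k d. ?G A B A' B' * D (A' @ a # B') (A @ a # B))"
      using h(2) by (simp add: sum.delta)
    finally show "(\<Sum>a'<d. \<Sum>B'\<in>tup k d. ?E (A @ a # B) (A' @ a' # B') * D (A' @ a' # B') (A @ a # B))
        = (\<Sum>B'\<in>tup k d. ?G A B A' B' * D (A' @ a # B') (A @ a # B))" .
  qed
  also have "\<dots> = (\<Sum>A\<in>tup m d. \<Sum>B\<in>tup k d. \<Sum>a<d. \<Sum>A'\<in>tup m d. \<Sum>B'\<in>tup k d.
      ?G A B A' B' * D (A' @ a # B') (A @ a # B))"
    by (intro sum.cong refl sum.swap)
  also have "\<dots> = (\<Sum>A\<in>tup m d. \<Sum>B\<in>tup k d. \<Sum>A'\<in>tup m d. \<Sum>a<d. \<Sum>B'\<in>tup k d.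
      ?G A B A' B' * D (A' @ a # B') (A @ a # B))"
    by (intro sum.cong refl sum.swap)
  also have "\<dots> = (\<Sum>A\<in>tup m d. \<Sum>B\<in>tup k d. \<Sum>A'\<in>tup m d. \<Sum>B'\<in>tup k d. \<Sum>a<d.
      ?G A B A' B' * D (A' @ a # B') (A @ a # B))"
    by (intro sum.cong refl sum.swap)
  also have "\<dots> = (\<Sum>A\<in>tup m d. \<Sum>B\<in>tup k d. \<Sum>A'\<in>tup m d. \<Sum>B'\<in>tup k d. (0::complex))"
    by (intro sum.cong refl) (simp add: sum_distrib_left[symmetric] D0)
  also have "\<dots> = 0" by simp
  finally show ?thesis .
qed

lemma trace_zero_B:
  assumes hN: "N = m + Suc k" and S: "S \<subseteq> {1..N}" and SB: "S \<inter> {m+2..N} = {}"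
    and D0: "\<And>A A' a a'. A \<in> tup m d \<Longrightarrow> A' \<in> tup m d \<Longrightarrow> a < d \<Longrightarrow> a' < d \<Longrightarrow>
              (\<Sum>B\<in>tup k d. D (A' @ a' # B) (A @ a # B)) = 0"
  shows "tr_prod N d (extend_op N S P) D = 0"
proof -
  let ?N = "N"
  let ?E = "extend_op ?N S P"
  let ?G = "\<lambda>A a A' a'. ?E (A @ a # replicate k 0) (A' @ a' # replicate k 0)"
  have Eeq: "\<And>A B A' B' a a'. A \<in> tup m d \<Longrightarrow> A' \<in> tup m d \<Longrightarrow> B \<in> tup k d \<Longrightarrow> B' \<in> tup k d \<Longrightarrow>
      ?E (A @ a # B) (A' @ a' # B') = (if B' = B then ?G A a A' a' else 0)"
  proof -
    fix A B A' B' :: "nat list" and a a' :: nat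
    assume h: "A \<in> tup m d" "A' \<in> tup m d" "B \<in> tup k d" "B' \<in> tup k d"
    hence l: "length A = m" "length A' = m" "length B = k" "length B' = k" by (auto simp: tup_def)
    show "?E (A @ a # B) (A' @ a' # B') = (if B' = B then ?G A a A' a' else 0)"
      using E_caseB[OF S[unfolded hN] SB[unfolded hN] l, of P a a', folded hN] by auto
  qed
  have "tr_prod ?N d ?E D = (\<Sum>A\<in>tup m d. \<Sum>a<d. \<Sum>B\<in>tup k d. \<Sum>A'\<in>tup m d. \<Sum>a'<d.
      ?G A a A' a' * D (A' @ a' # B) (A @ a # B))"
    unfolding tr_split6[of m k d, folded hN]
  proof (intro sum.cong refl)
    fix A a B A' a' assume h: "A \<in> tup m d" "a \<in> {..<d}" "B \<in> tup k d" "A' \<in> tup m d" "a' \<in> {..<d}"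
    have "(\<Sum>B'\<in>tup k d. ?E (A @ a # B) (A' @ a' # B') * D (A' @ a' # B') (A @ a # B))
        = (\<Sum>B'\<in>tup k d. if B' = B then ?G A a A' a' * D (A' @ a' # B') (A @ a # B) else 0)"
    proof (rule sum.cong[OF refl])
      fix B' assume B': "B' \<in> tup k d"
      show "?E (A @ a # B) (A' @ a' # B') * D (A' @ a' # B') (A @ a # B)
           = (if B' = B then ?G A a A' a' * D (A' @ a' # B') (A @ a # B) else 0)"
        using Eeq[OF h(1) h(4) h(3) B', of a a'] by simp
    qed
    also have "\<dots> = ?G A a A' a' * D (A' @ a' # B) (A @ a # B)"
      using h(3) by (simp add: sum.delta[OF tup_finite])
    finally show "(\<Sum>B'\<in>tup k d. ?E (A @ a # B) (A' @ a' # B') * D (A' @ a' # B') (A @ a # B))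
        = ?G A a A' a' * D (A' @ a' # B) (A @ a # B)" .
  qed
  also have "\<dots> = (\<Sum>A\<in>tup m d. \<Sum>a<d. \<Sum>A'\<in>tup m d. \<Sum>B\<in>tup k d. \<Sum>a'<d.
      ?G A a A' a' * D (A' @ a' # B) (A @ a # B))"
    by (intro sum.cong refl sum.swap)
  also have "\<dots> = (\<Sum>A\<in>tup m d. \<Sum>a<d. \<Sum>A'\<in>tup m d. \<Sum>a'<d. \<Sum>B\<in>tup k d.
      ?G A a A' a' * D (A' @ a' # B) (A @ a # B))"
    by (intro sum.cong refl sum.swap)
  also have "\<dots> = (\<Sum>A\<in>tup m d. \<Sum>a<d. \<Sum>A'\<in>tup m d. \<Sum>a'<d. (0::complex))"
    by (intro sum.cong refl) (simp add: sum_distrib_left[symmetric] D0)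
  also have "\<dots> = 0" by simp
  finally show ?thesis .
qed

lemma collapse1:
  fixes f :: "'i \<Rightarrow> 'x \<Rightarrow> complex"
  assumes "\<forall>i\<in>I. (\<Sum>x\<in>X. f i x * cnj (f i x)) = 1"
  shows "(\<Sum>x\<in>X. \<Sum>i\<in>I. a i * (f i x * cnj (f i x))) = (\<Sum>i\<in>I. a i)"
proof -
  have "(\<Sum>x\<in>X. \<Sum>i\<in>I. a i * (f i x * cnj (f i x))) = (\<Sum>i\<in>I. \<Sum>x\<in>X. a i * (f i x * cnj (f i x)))"
    by (rule sum.swap)
  also have "\<dots> = (\<Sum>i\<in>I. a i * (\<Sum>x\<in>X. f i x * cnj (f i x)))"
    by (simp add: sum_distrib_left)
  also have "\<dots> = (\<Sum>i\<in>I. a i)" using assms by simp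
  finally show ?thesis .
qed

lemma collapse2:
  fixes f :: "'i \<Rightarrow> 'x \<Rightarrow> complex"
  assumes fin: "finite I" and O: "\<forall>i\<in>I. \<forall>j\<in>I. (\<Sum>x\<in>X. f i x * cnj (f j x)) = (if i = j then 1 else 0)"
  shows "(\<Sum>x\<in>X. (\<Sum>i\<in>I. a i * f i x) * cnj (\<Sum>j\<in>I. b j * f j x)) = (\<Sum>i\<in>I. a i * cnj (b i))"
proof -
  have "(\<Sum>x\<in>X. (\<Sum>i\<in>I. a i * f i x) * cnj (\<Sum>j\<in>I. b j * f j x))
      = (\<Sum>x\<in>X. \<Sum>j\<in>I. \<Sum>i\<in>I. (a i * cnj (b j)) * (f i x * cnj (f j x)))"
    by (simp add: sum_distrib_left sum_distrib_right ac_simps)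
  also have "\<dots> = (\<Sum>j\<in>I. \<Sum>x\<in>X. \<Sum>i\<in>I. (a i * cnj (b j)) * (f i x * cnj (f j x)))"
    by (rule sum.swap)
  also have "\<dots> = (\<Sum>j\<in>I. \<Sum>i\<in>I. \<Sum>x\<in>X. (a i * cnj (b j)) * (f i x * cnj (f j x)))"
    by (intro sum.cong refl sum.swap)
  also have "\<dots> = (\<Sum>i\<in>I. \<Sum>j\<in>I. \<Sum>x\<in>X. (a i * cnj (b j)) * (f i x * cnj (f j x)))"
    by (rule sum.swap)
  also have "\<dots> = (\<Sum>i\<in>I. \<Sum>j\<in>I. (a i * cnj (b j)) * (if i = j then 1 else 0))"
  proof (intro sum.cong refl)
    fix i j assume "i \<in> I" "j \<in> I"
    thus "(\<Sum>x\<in>X. (a i * cnj (b j)) * (f i x * cnj (f j x))) = (a i * cnj (b j)) * (if i = j then 1 else 0)"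
      using O by (simp add: sum_distrib_left[symmetric])
  qed
  also have "\<dots> = (\<Sum>i\<in>I. a i * cnj (b i))"
    using fin by (simp add: if_distrib sum.delta cong: if_cong)
  finally show ?thesis .
qed

theorem corollary2:
  fixes m n d :: nat
    and phi psi :: "nat list \<Rightarrow> complex"
    and alpha :: "nat \<Rightarrow> real"
    and w :: "nat \<Rightarrow> nat \<Rightarrow> complex"
    and v :: "nat \<Rightarrow> nat list \<Rightarrow> complex"
    and S :: "nat set"
    and P :: "(nat \<Rightarrow> nat) \<Rightarrow> (nat \<Rightarrow> nat) \<Rightarrow> complex"
  assumes m: "m \<ge> 1" and n: "n \<ge> 2"
    and phi_unit: "unit_vec m d phi"
    and psi_unit: "unit_vec n d psi"
    and alpha_nonneg: "\<forall>i\<in>{1..d}. alpha i \<ge> 0"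
    and w_orthonormal: "\<forall>i\<in>{1..d}. \<forall>j\<in>{1..d}.
          (\<Sum>a<d. cnj (w i a) * w j a) = (if i = j then 1 else 0)"
    and v_orthonormal: "\<forall>i\<in>{1..d}. \<forall>j\<in>{1..d}.
          (\<Sum>ys\<in>tup (n - 1) d. cnj (v i ys) * v j ys) = (if i = j then 1 else 0)"
    and schmidt: "\<forall>a<d. \<forall>ys\<in>tup (n - 1) d.
          psi (a # ys) = (\<Sum>i=1..d. complex_of_real (alpha i) * w i a * v i ys)"
    and rho_def: "rho = (\<lambda>xs ys. \<Sum>i=1..d. complex_of_real ((alpha i)\<^sup>2)
          * (w i (hd xs) * cnj (w i (hd ys))) * (v i (tl xs) * cnj (v i (tl ys))))"
    and psi'_def: "psi' = (\<lambda>xs. phi (take m xs) * psi (drop m xs))"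
    and sigma_def: "sigma = (\<lambda>xs ys. proj_op phi (take m xs) (take m ys)
          * rho (drop m xs) (drop m ys))"
    and S_sub: "S \<subseteq> {1..m+n}"
    and P_proj: "is_projector_on S d P"
    and Pi_def: "Pi = extend_op (m + n) S P"
  shows "(m + 1 \<in> S \<and> S \<inter> {m+2..m+n} \<noteq> {} \<longrightarrow>
            Re (tr_prod (m + n) d Pi sigma) \<ge> (1 / real d) * Re (tr_prod (m + n) d Pi (proj_op psi')))
       \<and> (\<not> (m + 1 \<in> S \<and> S \<inter> {m+2..m+n} \<noteq> {}) \<longrightarrow>
            tr_prod (m + n) d Pi sigma = tr_prod (m + n) d Pi (proj_op psi'))"
proof -
  obtain k where nk: "n = Suc k" using n by (cases n) auto
  have k: "n - 1 = k" using nk by simp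
  define D where "D = (\<lambda>xs ys. sigma xs ys - proj_op psi' xs ys)"
  have trD: "tr_prod (m+n) d Pi sigma - tr_prod (m+n) d Pi (proj_op psi') = tr_prod (m+n) d Pi D"
    unfolding tr_prod_def D_def by (simp add: sum_subtractf right_diff_distrib)
  have w_on: "\<forall>i\<in>{1..d}. \<forall>j\<in>{1..d}. (\<Sum>a\<in>{..<d}. w i a * cnj (w j a)) = (if i = j then 1 else 0)"
  proof (intro ballI)
    fix i j assume "i \<in> {1..d}" "j \<in> {1..d}"
    hence "(\<Sum>a<d. cnj (w j a) * w i a) = (if j = i then 1 else 0)" using w_orthonormal by blast
    thus "(\<Sum>a\<in>{..<d}. w i a * cnj (w j a)) = (if i = j then 1 else 0)" by (auto simp: mult.commute)
  qed
  have v_on: "\<forall>i\<in>{1..d}. \<forall>j\<in>{1..d}. (\<Sum>B\<in>tup k d. v i B * cnj (v j B)) = (if i = j then 1 else 0)"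
  proof (intro ballI)
    fix i j assume "i \<in> {1..d}" "j \<in> {1..d}"
    hence "(\<Sum>B\<in>tup k d. cnj (v j B) * v i B) = (if j = i then 1 else 0)" using v_orthonormal k by blast
    thus "(\<Sum>B\<in>tup k d. v i B * cnj (v j B)) = (if i = j then 1 else 0)" by (auto simp: mult.commute)
  qed
  have w_n: "\<forall>i\<in>{1..d}. (\<Sum>a\<in>{..<d}. w i a * cnj (w i a)) = 1" using w_on by simp
  have v_n: "\<forall>i\<in>{1..d}. (\<Sum>B\<in>tup k d. v i B * cnj (v i B)) = 1" using v_on by simp
  have sig: "\<And>A A' a a' B B'. length A = m \<Longrightarrow> length A' = m \<Longrightarrow> sigma (A' @ a' # B') (A @ a # B)
     = phi A' * cnj (phi A) * (\<Sum>i=1..d. complex_of_real ((alpha i)\<^sup>2) * (w i a' * cnj (w i a)) * (v i B' * cnj (v i B)))"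
    unfolding sigma_def rho_def proj_op_def by simp
  have psi_exp: "\<And>a B. a < d \<Longrightarrow> B \<in> tup k d \<Longrightarrow> psi (a # B) = (\<Sum>i=1..d. complex_of_real (alpha i) * w i a * v i B)"
    using schmidt k by simp
  have pp: "\<And>A A' a a' B B'. length A = m \<Longrightarrow> length A' = m \<Longrightarrow> proj_op psi' (A' @ a' # B') (A @ a # B)
     = phi A' * cnj (phi A) * (psi (a' # B') * cnj (psi (a # B)))"
    unfolding psi'_def proj_op_def by simp
  show ?thesis
  proof (intro conjI impI)
    show "Re (tr_prod (m + n) d Pi sigma) \<ge> (1 / real d) * Re (tr_prod (m + n) d Pi (proj_op psi'))"
      by (rule part1[OF m n phi_unit schmidt rho_def psi'_def sigma_def S_sub P_proj Pi_def])
  next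
    assume nc: "\<not> (m + 1 \<in> S \<and> S \<inter> {m+2..m+n} \<noteq> {})"
    have hN: "m + n = m + Suc k" using nk by simp
    have "tr_prod (m+n) d Pi D = 0"
    proof (cases "Suc m \<in> S")
      case False
      show ?thesis unfolding Pi_def
      proof (rule trace_zero_A[OF hN S_sub False])
        fix A A' B B' assume h: "A \<in> tup m d" "A' \<in> tup m d" "B \<in> tup k d" "B' \<in> tup k d"
        hence l: "length A = m" "length A' = m" by (auto simp: tup_def)
        have s1: "(\<Sum>a<d. sigma (A' @ a # B') (A @ a # B))
            = phi A' * cnj (phi A) * (\<Sum>i=1..d. complex_of_real ((alpha i)\<^sup>2) * (v i B' * cnj (v i B)))"
        proof -
          have "(\<Sum>a<d. sigma (A' @ a # B') (A @ a # B))
             = phi A' * cnj (phi A) * (\<Sum>a<d. \<Sum>i=1..d. (complex_of_real ((alpha i)\<^sup>2) * (v i B' * cnj (v i B))) * (w i a * cnj (w i a)))"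
            by (simp add: sig[OF l] sum_distrib_left ac_simps)
          also have "\<dots> = phi A' * cnj (phi A) * (\<Sum>i=1..d. complex_of_real ((alpha i)\<^sup>2) * (v i B' * cnj (v i B)))"
            using collapse1[OF w_n] by simp
          finally show ?thesis .
        qed
        have s2: "(\<Sum>a<d. proj_op psi' (A' @ a # B') (A @ a # B))
            = phi A' * cnj (phi A) * (\<Sum>i=1..d. complex_of_real ((alpha i)\<^sup>2) * (v i B' * cnj (v i B)))"
        proof -
          have "(\<Sum>a<d. proj_op psi' (A' @ a # B') (A @ a # B))
             = phi A' * cnj (phi A) * (\<Sum>a<d. (\<Sum>i=1..d. (complex_of_real (alpha i) * v i B') * w i a)
                   * cnj (\<Sum>j=1..d. (complex_of_real (alpha j) * v j B) * w j a))"
            using h by (simp add: pp[OF l] psi_exp sum_distrib_left ac_simps)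
          also have "\<dots> = phi A' * cnj (phi A) * (\<Sum>i=1..d. (complex_of_real (alpha i) * v i B') * cnj (complex_of_real (alpha i) * v i B))"
            by (rule arg_cong[where f="\<lambda>z. phi A' * cnj (phi A) * z"], rule collapse2[OF finite_atLeastAtMost w_on])
          also have "\<dots> = phi A' * cnj (phi A) * (\<Sum>i=1..d. complex_of_real ((alpha i)\<^sup>2) * (v i B' * cnj (v i B)))"
            by (simp add: power2_eq_square ac_simps)
          finally show ?thesis .
        qed
        show "(\<Sum>a<d. D (A' @ a # B') (A @ a # B)) = 0"
          unfolding D_def using s1 s2 by (simp add: sum_subtractf)
      qed
    next
      case True
      hence SB: "S \<inter> {m+2..m+n} = {}" using nc by simp
      show ?thesis unfolding Pi_def
      proof (rule trace_zero_B[OF hN S_sub SB])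
        fix A A' a a' assume h: "A \<in> tup m d" "A' \<in> tup m d" "a < d" "a' < d"
        hence l: "length A = m" "length A' = m" by (auto simp: tup_def)
        have s1: "(\<Sum>B\<in>tup k d. sigma (A' @ a' # B) (A @ a # B))
            = phi A' * cnj (phi A) * (\<Sum>i=1..d. complex_of_real ((alpha i)\<^sup>2) * (w i a' * cnj (w i a)))"
        proof -
          have "(\<Sum>B\<in>tup k d. sigma (A' @ a' # B) (A @ a # B))
             = phi A' * cnj (phi A) * (\<Sum>B\<in>tup k d. \<Sum>i=1..d. (complex_of_real ((alpha i)\<^sup>2) * (w i a' * cnj (w i a))) * (v i B * cnj (v i B)))"
            by (simp add: sig[OF l] sum_distrib_left ac_simps)
          also have "\<dots> = phi A' * cnj (phi A) * (\<Sum>i=1..d. complex_of_real ((alpha i)\<^sup>2) * (w i a' * cnj (w i a)))"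
            using collapse1[OF v_n] by simp
          finally show ?thesis .
        qed
        have s2: "(\<Sum>B\<in>tup k d. proj_op psi' (A' @ a' # B) (A @ a # B))
            = phi A' * cnj (phi A) * (\<Sum>i=1..d. complex_of_real ((alpha i)\<^sup>2) * (w i a' * cnj (w i a)))"
        proof -
          have "(\<Sum>B\<in>tup k d. proj_op psi' (A' @ a' # B) (A @ a # B))
             = phi A' * cnj (phi A) * (\<Sum>B\<in>tup k d. (\<Sum>i=1..d. (complex_of_real (alpha i) * w i a') * v i B)
                   * cnj (\<Sum>j=1..d. (complex_of_real (alpha j) * w j a) * v j B))"
          proof -
            have "\<And>B. B \<in> tup k d \<Longrightarrow> proj_op psi' (A' @ a' # B) (A @ a # B)
                = phi A' * cnj (phi A) * ((\<Sum>i=1..d. (complex_of_real (alpha i) * w i a') * v i B)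
                   * cnj (\<Sum>j=1..d. (complex_of_real (alpha j) * w j a) * v j B))"
              using h by (simp add: pp[OF l] psi_exp ac_simps)
            thus ?thesis by (simp add: sum_distrib_left)
          qed
          also have "\<dots> = phi A' * cnj (phi A) * (\<Sum>i=1..d. (complex_of_real (alpha i) * w i a') * cnj (complex_of_real (alpha i) * w i a))"
            by (rule arg_cong[where f="\<lambda>z. phi A' * cnj (phi A) * z"], rule collapse2[OF finite_atLeastAtMost v_on])
          also have "\<dots> = phi A' * cnj (phi A) * (\<Sum>i=1..d. complex_of_real ((alpha i)\<^sup>2) * (w i a' * cnj (w i a)))"
            by (simp add: power2_eq_square ac_simps)
          finally show ?thesis .
        qed
        show "(\<Sum>B\<in>tup k d. D (A' @ a' # B) (A @ a # B)) = 0"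
          unfolding D_def using s1 s2 by (simp add: sum_subtractf)
      qed
    qed
    thus "tr_prod (m + n) d Pi sigma = tr_prod (m + n) d Pi (proj_op psi')" using trD by simp
  qed
qed

end
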